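(* Let $\varepsilon>0$, $\Omega\subset\mathbb{R}^2$ bounded open, $u\in\mathcal{SF}_\varepsilon(\Omega)$ and $R\in\mathcal{R}_\varepsilon(u)$, and assume $u(\mathcal{L}_\varepsilon(R))$ contains four points. If $i,j\in\mathcal{L}_\varepsilon$ are such that $[i,j]\subset R$ is an edge of $\mathcal{E}_\varepsilon$ and $u(i)\notin\{u(j),-u(j)\}$, then $[i,j]$ is a boundary edge of $R$.
   Context: $\mathcal{L}=\{ae_1+b\hat e_2:a,b\in\mathbb{Z}\}$ with $e_1=(1,0)$, $\hat e_2=\frac12(1,\sqrt3)$, $\mathcal{L}_\varepsilon=\varepsilon\mathcal{L}$, $\mathcal{L}_\varepsilon(R)=\mathcal{L}_\varepsilon\cap R$; $\mathcal{T}_\varepsilon$ is the set of closed triangles with vertices in $\mathcal{L}_\varepsilon$ pairwise at distance $\varepsilon$; $\mathcal{E}_\varepsilon$ the set of segments $[i,j]$, $i,j\in\mathcal{L}_\varepsilon$, $|i-j|=\varepsilon$. $n=(0,0,1)$; $\mathcal{SF}_\varepsilon(\Omega)$ is the set of $u:\mathcal{L}_\varepsilon\to\mathbb{S}^2$ with $u=n$ on $\mathcal{L}_\varepsilon\setminus\Omega$. $\mathcal{N}_\varepsilon(u)=\{[i,j]\in\mathcal{E}_\varepsilon:u(i)=-u(j)\}$, $\mathcal{C}_\varepsilon(u)=\mathcal{E}_\varepsilon\setminus\mathcal{N}_\varepsilon(u)$. Two triangles of $\mathcal{T}_\varepsilon$ are neighbours if their intersection is an edge in $\mathcal{N}_\varepsilon(u)$,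 and connected if joined by a finite chain of consecutive neighbours. $\mathcal{R}_\varepsilon(u)$ is the set of admissible interpolation regions: unions of pairwise connected triangles of $\mathcal{T}_\varepsilon$ that are maximal with respect to inclusion. A boundary edge of $R$ is an edge $[i,j]\in\mathcal{C}_\varepsilon(u)$ which is the common edge of a triangle $T\subseteq R$ and a triangle $T'\in\mathcal{T}_\varepsilon$ with $T'\subseteq\mathbb{R}^2\setminus\mathrm{int}(R)$. *)

theory Defs
  imports "HOL-Analysis.Analysis"
begin

type_synonym pt = "real \<times> real"
type_synonym spin = "real \<times> real \<times> real"

definition e1 :: pt where "e1 = (1, 0)"
definition e2hat :: pt where "e2hat = (1/2, sqrt 3 / 2)"

definition lattice :: "real \<Rightarrow> pt set" where
  "lattice eps = {eps *\<^sub>R (of_int a *\<^sub>R e1 + of_int b *\<^sub>R e2hat) | a b :: int. True}"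

definition npole :: spin where "npole = (0, 0, 1)"

definition triangles :: "real \<Rightarrow> pt set set" where
  "triangles eps = {convex hull {a, b, c} | a b c.
      a \<in> lattice eps \<and> b \<in> lattice eps \<and> c \<in> lattice eps \<and>
      dist a b = eps \<and> dist b c = eps \<and> dist a c = eps}"

definition edges :: "real \<Rightarrow> pt set set" where
  "edges eps = {closed_segment i j | i j. i \<in> lattice eps \<and> j \<in> lattice eps \<and> dist i j = eps}"

text \<open>Spin fields: u : L_eps \<rightarrow> S^2, u = n on L_eps outside Omega (values off the lattice irrelevant).\<close>
definition SF :: "real \<Rightarrow> pt set \<Rightarrow> (pt \<Rightarrow> spin) set" where
  "SF eps \<Omega> = {u. (\<forall>i \<in> lattice eps. u i \<in> sphere 0 1) \<and>
                    (\<forall>i \<in> lattice eps - \<Omega>. u i = npole)}"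

definition Nedges :: "real \<Rightarrow> (pt \<Rightarrow> spin) \<Rightarrow> pt set set" where
  "Nedges eps u = {closed_segment i j | i j. i \<in> lattice eps \<and> j \<in> lattice eps \<and>
                     dist i j = eps \<and> u i = - u j}"

definition Cedges :: "real \<Rightarrow> (pt \<Rightarrow> spin) \<Rightarrow> pt set set" where
  "Cedges eps u = edges eps - Nedges eps u"

definition neighbours :: "real \<Rightarrow> (pt \<Rightarrow> spin) \<Rightarrow> pt set \<Rightarrow> pt set \<Rightarrow> bool" where
  "neighbours eps u T T' \<longleftrightarrow> T \<in> triangles eps \<and> T' \<in> triangles eps \<and>
     T \<inter> T' \<in> Nedges eps u"

definition tri_connected :: "real \<Rightarrow> (pt \<Rightarrow> spin) \<Rightarrow> pt set \<Rightarrow> pt set \<Rightarrow> bool" where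
  "tri_connected eps u T T' \<longleftrightarrow> T \<in> triangles eps \<and> T' \<in> triangles eps \<and>
     (neighbours eps u)\<^sup>*\<^sup>* T T'"

definition pw_connected_union :: "real \<Rightarrow> (pt \<Rightarrow> spin) \<Rightarrow> pt set \<Rightarrow> bool" where
  "pw_connected_union eps u R \<longleftrightarrow> (\<exists>S. S \<subseteq> triangles eps \<and>
      (\<forall>T\<in>S. \<forall>T'\<in>S. tri_connected eps u T T') \<and> R = \<Union>S)"

definition regions :: "real \<Rightarrow> (pt \<Rightarrow> spin) \<Rightarrow> pt set set" where
  "regions eps u = {R. pw_connected_union eps u R \<and>
      (\<forall>R'. pw_connected_union eps u R' \<and> R \<subseteq> R' \<longrightarrow> R' = R)}"

definition boundary_edge :: "real \<Rightarrow> (pt \<Rightarrow> spin) \<Rightarrow> pt set \<Rightarrow> pt set \<Rightarrow> bool" where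
  "boundary_edge eps u R E \<longleftrightarrow> E \<in> Cedges eps u \<and>
     (\<exists>T T'. T \<in> triangles eps \<and> T' \<in> triangles eps \<and> T \<subseteq> R \<and>
        T' \<subseteq> UNIV - interior R \<and> T \<inter> T' = E)"

end

theory Submission
  imports Defs
begin



definition Q :: "real \<Rightarrow> real \<Rightarrow> real \<Rightarrow> pt" where
  "Q eps s t = eps *\<^sub>R (s *\<^sub>R e1 + t *\<^sub>R e2hat)"
definition L :: "real \<Rightarrow> int \<Rightarrow> int \<Rightarrow> pt" where
  "L eps a b = Q eps (of_int a) (of_int b)"
definition cs :: "real \<Rightarrow> pt \<Rightarrow> real" where
  "cs eps x = fst x / eps - snd x / (eps * sqrt 3)"
definition ct :: "real \<Rightarrow> pt \<Rightarrow> real" where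
  "ct eps x = 2 * snd x / (eps * sqrt 3)"

lemma Q_simp: "Q eps s t = (eps * (s + t/2), eps * t * sqrt 3 / 2)"
  by (simp add: Q_def e1_def e2hat_def algebra_simps)

lemma cs_Q[simp]: "eps \<noteq> 0 \<Longrightarrow> cs eps (Q eps s t) = s"
  by (simp add: Q_simp cs_def field_simps)
lemma ct_Q[simp]: "eps \<noteq> 0 \<Longrightarrow> ct eps (Q eps s t) = t"
  by (simp add: Q_simp ct_def field_simps)
lemma cs_L[simp]: "eps \<noteq> 0 \<Longrightarrow> cs eps (L eps a b) = of_int a"
  by (simp add: L_def)
lemma ct_L[simp]: "eps \<noteq> 0 \<Longrightarrow> ct eps (L eps a b) = of_int b"
  by (simp add: L_def)

lemma Q_cs_ct: "eps \<noteq> 0 \<Longrightarrow> Q eps (cs eps x) (ct eps x) = x"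
  by (cases x) (simp add: Q_simp cs_def ct_def field_simps)

lemma pt_eq: "eps \<noteq> 0 \<Longrightarrow> cs eps x = cs eps y \<Longrightarrow> ct eps x = ct eps y \<Longrightarrow> x = y"
  by (metis Q_cs_ct)

lemma cs_add[simp]: "cs eps (x + y) = cs eps x + cs eps y"
  by (simp add: cs_def add_divide_distrib diff_divide_distrib)
lemma ct_add[simp]: "ct eps (x + y) = ct eps x + ct eps y"
  by (simp add: ct_def add_divide_distrib distrib_left)
lemma cs_scale[simp]: "cs eps (c *\<^sub>R x) = c * cs eps x"
  by (simp add: cs_def algebra_simps)
lemma ct_scale[simp]: "ct eps (c *\<^sub>R x) = c * ct eps x"
  by (simp add: ct_def algebra_simps)
lemma cs_diff[simp]: "cs eps (x - y) = cs eps x - cs eps y"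
  by (simp add: cs_def algebra_simps diff_divide_distrib)
lemma ct_diff[simp]: "ct eps (x - y) = ct eps x - ct eps y"
  by (simp add: ct_def algebra_simps diff_divide_distrib)

lemma L_inj[simp]: "eps \<noteq> 0 \<Longrightarrow> L eps a b = L eps c d \<longleftrightarrow> a = c \<and> b = d"
  by (metis cs_L ct_L of_int_eq_iff)

lemma lattice_L: "lattice eps = {L eps a b | a b. True}"
  by (simp add: lattice_def L_def Q_def)

lemma lattice_E: "x \<in> lattice eps \<Longrightarrow> \<exists>a b. x = L eps a b"
  by (auto simp: lattice_L)

lemma L_lattice[simp]: "L eps a b \<in> lattice eps"
  by (auto simp: lattice_L)

lemma norm_Q: "norm (Q eps s t) = \<bar>eps\<bar> * sqrt (s^2 + s*t + t^2)"
proof -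
  have "norm (Q eps s t) = sqrt ((eps * (s + t/2))^2 + (eps * t * sqrt 3 / 2)^2)"
    by (simp add: Q_simp norm_Pair power_divide)
  also have "(eps * (s + t/2))^2 + (eps * t * sqrt 3 / 2)^2 = eps^2 * (s^2 + s*t + t^2)"
    by (simp add: power2_eq_square algebra_simps)
  finally show ?thesis by (simp add: real_sqrt_mult)
qed

lemma Q_diff: "Q eps s t - Q eps s' t' = Q eps (s - s') (t - t')"
  by (simp add: Q_def algebra_simps)

lemma dist_L: "eps > 0 \<Longrightarrow> dist (L eps a b) (L eps c d) = eps \<longleftrightarrow> (a-c)^2 + (a-c)*(b-d) + (b-d)^2 = 1"
proof -
  assume e: "eps > 0"
  have "dist (L eps a b) (L eps c d) = eps * sqrt (of_int ((a-c)^2 + (a-c)*(b-d) + (b-d)^2))"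
    using e by (simp add: dist_norm L_def Q_diff norm_Q)
  also have "\<dots> = eps \<longleftrightarrow> sqrt (of_int ((a-c)^2 + (a-c)*(b-d) + (b-d)^2)) = 1" using e by simp
  also have "\<dots> \<longleftrightarrow> (a-c)^2 + (a-c)*(b-d) + (b-d)^2 = 1" by (metis of_int_eq_1_iff real_sqrt_eq_1_iff)
  finally show ?thesis .
qed

lemma unit6: fixes x y :: int assumes "x^2 + x*y + y^2 = 1"
  shows "(x,y) \<in> {(1,0),(0,1),(-1,1),(-1,0),(0,-1),(1,-1)}"
proof -
  have "(2*x+y)^2 + 3*y^2 = 4" using assms by (simp add: power2_eq_square algebra_simps)
  moreover have "(2*x+y)^2 \<ge> 0" by simp
  ultimately have "3*y^2 \<le> 4" by linarith
  hence "y^2 \<le> 1" by presburger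
  hence y: "\<bar>y\<bar> \<le> 1" using abs_le_square_iff[of y 1] by simp
  have "(2*y+x)^2 + 3*x^2 = 4" using assms by (simp add: power2_eq_square algebra_simps)
  moreover have "(2*y+x)^2 \<ge> 0" by simp
  ultimately have "3*x^2 \<le> 4" by linarith
  hence "x^2 \<le> 1" by presburger
  hence x: "\<bar>x\<bar> \<le> 1" using abs_le_square_iff[of x 1] by simp
  have "x \<in> {-1,0,1}" "y \<in> {-1,0,1}" using x y by auto
  thus ?thesis using assms by auto
qed




definition up :: "real \<Rightarrow> int \<Rightarrow> int \<Rightarrow> pt set" where
  "up eps a b = convex hull {L eps a b, L eps (a+1) b, L eps a (b+1)}"
definition down :: "real \<Rightarrow> int \<Rightarrow> int \<Rightarrow> pt set" where
  "down eps a b = convex hull {L eps (a+1) b, L eps a (b+1), L eps (a+1) (b+1)}"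

lemma hull3_mem:
  assumes e: "eps \<noteq> 0"
  shows "x \<in> convex hull {L eps a1 b1, L eps a2 b2, L eps a3 b3} \<longleftrightarrow>
    (\<exists>u v w. 0 \<le> u \<and> 0 \<le> v \<and> 0 \<le> w \<and> u + v + w = 1 \<and>
       cs eps x = u * of_int a1 + v * of_int a2 + w * of_int a3 \<and> ct eps x = u * of_int b1 + v * of_int b2 + w * of_int b3)"
proof
  assume "x \<in> convex hull {L eps a1 b1, L eps a2 b2, L eps a3 b3}"
  then obtain u v w where "0 \<le> u" "0 \<le> v" "0 \<le> w" "u + v + w = 1"
    "x = u *\<^sub>R L eps a1 b1 + v *\<^sub>R L eps a2 b2 + w *\<^sub>R L eps a3 b3"
    unfolding convex_hull_3 by blast
  thus "\<exists>u v w. 0 \<le> u \<and> 0 \<le> v \<and> 0 \<le> w \<and> u + v + w = 1 \<and>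
       cs eps x = u * of_int a1 + v * of_int a2 + w * of_int a3 \<and> ct eps x = u * of_int b1 + v * of_int b2 + w * of_int b3"
    using e by (intro exI[of _ u] exI[of _ v] exI[of _ w]) simp
next
  assume "\<exists>u v w. 0 \<le> u \<and> 0 \<le> v \<and> 0 \<le> w \<and> u + v + w = 1 \<and>
       cs eps x = u * of_int a1 + v * of_int a2 + w * of_int a3 \<and> ct eps x = u * of_int b1 + v * of_int b2 + w * of_int b3"
  then obtain u v w where h: "0 \<le> u" "0 \<le> v" "0 \<le> w" "u + v + w = 1"
       "cs eps x = u * of_int a1 + v * of_int a2 + w * of_int a3" "ct eps x = u * of_int b1 + v * of_int b2 + w * of_int b3" by blast
  have "x = u *\<^sub>R L eps a1 b1 + v *\<^sub>R L eps a2 b2 + w *\<^sub>R L eps a3 b3"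
    by (rule pt_eq[OF e]) (use e h in simp_all)
  thus "x \<in> convex hull {L eps a1 b1, L eps a2 b2, L eps a3 b3}"
    unfolding convex_hull_3 using h by blast
qed

lemma mem_up: assumes e: "eps \<noteq> 0" shows "x \<in> up eps a b \<longleftrightarrow>
   cs eps x \<ge> a \<and> ct eps x \<ge> b \<and> cs eps x + ct eps x \<le> a + b + 1"
proof
  assume "x \<in> up eps a b"
  then obtain u v w where h: "0 \<le> u" "0 \<le> v" "0 \<le> w" "u + v + w = 1"
    "cs eps x = u * of_int a + v * of_int (a+1) + w * of_int a"
    "ct eps x = u * of_int b + v * of_int b + w * of_int (b+1)"
    unfolding up_def hull3_mem[OF e] by blast
  have "u * of_int a + v * of_int (a+1) + w * of_int a = (u+v+w) * a + v"
    by (simp add: algebra_simps)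
  hence 1: "cs eps x = a + v" using h by simp
  have "u * of_int b + v * of_int b + w * of_int (b+1) = (u+v+w) * b + w"
    by (simp add: algebra_simps)
  hence 2: "ct eps x = b + w" using h by simp
  show "cs eps x \<ge> a \<and> ct eps x \<ge> b \<and> cs eps x + ct eps x \<le> a + b + 1"
    using 1 2 h by linarith
next
  assume h: "cs eps x \<ge> a \<and> ct eps x \<ge> b \<and> cs eps x + ct eps x \<le> a + b + 1"
  show "x \<in> up eps a b"
    unfolding up_def hull3_mem[OF e]
    apply (rule exI[of _ "1 - (cs eps x - a) - (ct eps x - b)"])
    apply (rule exI[of _ "cs eps x - a"])
    apply (rule exI[of _ "ct eps x - b"])
    using h by (simp add: algebra_simps)
qed

lemma mem_down: assumes e: "eps \<noteq> 0" shows "x \<in> down eps a b \<longleftrightarrow>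
   cs eps x \<le> a + 1 \<and> ct eps x \<le> b + 1 \<and> cs eps x + ct eps x \<ge> a + b + 1"
proof
  assume "x \<in> down eps a b"
  then obtain u v w where h: "0 \<le> u" "0 \<le> v" "0 \<le> w" "u + v + w = 1"
    "cs eps x = u * of_int (a+1) + v * of_int a + w * of_int (a+1)"
    "ct eps x = u * of_int b + v * of_int (b+1) + w * of_int (b+1)"
    unfolding down_def hull3_mem[OF e] by blast
  have "u * of_int (a+1) + v * of_int a + w * of_int (a+1) = (u+v+w) * (a+1) - v"
    by (simp add: algebra_simps)
  hence 1: "cs eps x = a + 1 - v" using h by simp
  have "u * of_int b + v * of_int (b+1) + w * of_int (b+1) = (u+v+w) * (b+1) - u"
    by (simp add: algebra_simps)
  hence 2: "ct eps x = b + 1 - u" using h by simp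
  show "cs eps x \<le> a + 1 \<and> ct eps x \<le> b + 1 \<and> cs eps x + ct eps x \<ge> a + b + 1"
    using 1 2 h by linarith
next
  assume h: "cs eps x \<le> a + 1 \<and> ct eps x \<le> b + 1 \<and> cs eps x + ct eps x \<ge> a + b + 1"
  show "x \<in> down eps a b"
    unfolding down_def hull3_mem[OF e]
    apply (rule exI[of _ "b + 1 - ct eps x"])
    apply (rule exI[of _ "a + 1 - cs eps x"])
    apply (rule exI[of _ "cs eps x + ct eps x - a - b - 1"])
    using h by (simp add: algebra_simps)
qed




definition upV where "upV eps a b = {L eps a b, L eps (a+1) b, L eps a (b+1)}"
definition downV where "downV eps a b = {L eps (a+1) b, L eps a (b+1), L eps (a+1) (b+1)}"

lemma nb6:
  assumes "(a-c)^2 + (a-c)*(b-d) + (b-d)^2 = (1::int)"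
  shows "(c,d) \<in> {(a-1,b),(a,b-1),(a+1,b-1),(a+1,b),(a,b+1),(a-1,b+1)}"
proof -
  have "(a-c, b-d) \<in> {(1,0),(0,1),(-1,1),(-1,0),(0,-1),(1,-1)}" using unit6[OF assms] .
  thus ?thesis by auto
qed

lemma cg12:
  assumes c: "(c,d) \<in> {(a-1,b),(a,b-1),(a+1,b-1),(a+1,b),(a,b+1),(a-1,b+1)}"
  and g: "(g,h) \<in> {(a-1,b),(a,b-1),(a+1,b-1),(a+1,b),(a,b+1),(a-1,b+1)}"
  and r: "(c-g)^2 + (c-g)*(d-h) + (d-h)^2 = (1::int)"
  shows "((c,d),(g,h)) \<in> {((a+1,b),(a,b+1)), ((a,b+1),(a+1,b)),
     ((a,b+1),(a-1,b+1)), ((a-1,b+1),(a,b+1)),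
     ((a-1,b+1),(a-1,b)), ((a-1,b),(a-1,b+1)),
     ((a-1,b),(a,b-1)), ((a,b-1),(a-1,b)),
     ((a,b-1),(a+1,b-1)), ((a+1,b-1),(a,b-1)),
     ((a+1,b-1),(a+1,b)), ((a+1,b),(a+1,b-1))}"
  using c g r
  apply (simp only: insert_iff singleton_iff empty_iff prod.inject simp_thms)
  apply (elim disjE conjE)
  apply (simp_all add: power2_eq_square)
  done

lemma set12: "((c,d),(g,h)) \<in> {((a+1,b),(a,b+1)), ((a,b+1),(a+1,b)),
     ((a,b+1),(a-1,b+1)), ((a-1,b+1),(a,b+1)),
     ((a-1,b+1),(a-1,b)), ((a-1,b),(a-1,b+1)),
     ((a-1,b),(a,b-1)), ((a,b-1),(a-1,b)),
     ((a,b-1),(a+1,b-1)), ((a+1,b-1),(a,b-1)),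
     ((a+1,b-1),(a+1,b)), ((a+1,b),(a+1,b-1))} \<Longrightarrow> {L eps a b, L eps c d, L eps g h} \<in> {upV eps a b, upV eps (a-1) b, upV eps a (b-1),
      downV eps (a-1) b, downV eps a (b-1), downV eps (a-1) (b-1)}"
    unfolding upV_def downV_def
    apply (simp only: insert_iff singleton_iff empty_iff prod.inject simp_thms)
    apply (elim disjE conjE)
    apply (simp_all add: insert_commute)
    done

lemma up_hull: "up eps a b = convex hull (upV eps a b)" by (simp add: up_def upV_def)
lemma down_hull: "down eps a b = convex hull (downV eps a b)" by (simp add: down_def downV_def)

lemma tri_class:
  assumes e: "eps > 0" and x: "x \<in> lattice eps" and y: "y \<in> lattice eps" and z: "z \<in> lattice eps"
    and d: "dist x y = eps" "dist y z = eps" "dist x z = eps"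
  shows "\<exists>a b. ({x,y,z} = upV eps a b \<and> convex hull {x,y,z} = up eps a b) \<or>
                ({x,y,z} = downV eps a b \<and> convex hull {x,y,z} = down eps a b)"
proof -
  obtain a b where xa: "x = L eps a b" using lattice_E[OF x] by blast
  obtain c d where yc: "y = L eps c d" using lattice_E[OF y] by blast
  obtain g h where zg: "z = L eps g h" using lattice_E[OF z] by blast
  have 1: "(a-c)^2 + (a-c)*(b-d) + (b-d)^2 = 1" using d(1) e by (simp add: xa yc dist_L)
  have 2: "(c-g)^2 + (c-g)*(d-h) + (d-h)^2 = 1" using d(2) e by (simp add: zg yc dist_L)
  have 3: "(a-g)^2 + (a-g)*(b-h) + (b-h)^2 = 1" using d(3) e by (simp add: xa zg dist_L)
  have "{x,y,z} \<in> {upV eps a b, upV eps (a-1) b, upV eps a (b-1),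
      downV eps (a-1) b, downV eps a (b-1), downV eps (a-1) (b-1)}"
    unfolding xa yc zg by (rule set12[OF cg12[OF nb6[OF 1] nb6[OF 3] 2]])
  thus ?thesis
  proof (elim insertE emptyE)
    assume h: "{x,y,z} = upV eps a b" show ?thesis
      by (rule exI[of _ a], rule exI[of _ b]) (simp add: h up_hull)
  next
    assume h: "{x,y,z} = upV eps (a-1) b" show ?thesis
      by (rule exI[of _ "a-1"], rule exI[of _ b]) (simp add: h up_hull)
  next
    assume h: "{x,y,z} = upV eps a (b-1)" show ?thesis
      by (rule exI[of _ a], rule exI[of _ "b-1"]) (simp add: h up_hull)
  next
    assume h: "{x,y,z} = downV eps (a-1) b" show ?thesis
      by (rule exI[of _ "a-1"], rule exI[of _ b]) (simp add: h down_hull)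
  next
    assume h: "{x,y,z} = downV eps a (b-1)" show ?thesis
      by (rule exI[of _ a], rule exI[of _ "b-1"]) (simp add: h down_hull)
  next
    assume h: "{x,y,z} = downV eps (a-1) (b-1)" show ?thesis
      by (rule exI[of _ "a-1"], rule exI[of _ "b-1"]) (simp add: h down_hull)
  qed
qed

lemma latt_up: assumes e: "eps \<noteq> 0" shows "lattice eps \<inter> up eps a b = upV eps a b"
proof
  show "lattice eps \<inter> up eps a b \<subseteq> upV eps a b"
  proof
    fix x assume "x \<in> lattice eps \<inter> up eps a b"
    then obtain c d where x: "x = L eps c d" and m: "x \<in> up eps a b" using lattice_E by blast
    have "c \<ge> a" "d \<ge> b" "c + d \<le> a + b + 1" using m e by (simp_all add: mem_up x)
    hence "(c = a \<and> d = b) \<or> (c = a+1 \<and> d = b) \<or> (c = a \<and> d = b+1)" by presburger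
    thus "x \<in> upV eps a b" by (auto simp: upV_def x)
  qed
  show "upV eps a b \<subseteq> lattice eps \<inter> up eps a b"
    unfolding up_hull by (auto simp: upV_def intro: hull_inc)
qed

lemma latt_down: assumes e: "eps \<noteq> 0" shows "lattice eps \<inter> down eps a b = downV eps a b"
proof
  show "lattice eps \<inter> down eps a b \<subseteq> downV eps a b"
  proof
    fix x assume "x \<in> lattice eps \<inter> down eps a b"
    then obtain c d where x: "x = L eps c d" and m: "x \<in> down eps a b" using lattice_E by blast
    have "c \<le> a + 1" "d \<le> b + 1" "c + d \<ge> a + b + 1" using m e by (simp_all add: mem_down x)
    hence "(c = a+1 \<and> d = b) \<or> (c = a \<and> d = b+1) \<or> (c = a+1 \<and> d = b+1)" by presburger
    thus "x \<in> downV eps a b" by (auto simp: downV_def x)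
  qed
  show "downV eps a b \<subseteq> lattice eps \<inter> down eps a b"
    unfolding down_hull by (auto simp: downV_def intro: hull_inc)
qed

lemma up_tri: "eps > 0 \<Longrightarrow> up eps a b \<in> triangles eps"
  unfolding triangles_def up_def
  by (rule CollectI, rule exI[of _ "L eps a b"], rule exI[of _ "L eps (a+1) b"],
      rule exI[of _ "L eps a (b+1)"]) (simp add: dist_L)

lemma down_tri: "eps > 0 \<Longrightarrow> down eps a b \<in> triangles eps"
  unfolding triangles_def down_def
  by (rule CollectI, rule exI[of _ "L eps (a+1) b"], rule exI[of _ "L eps a (b+1)"],
      rule exI[of _ "L eps (a+1) (b+1)"]) (simp add: dist_L)

lemma triE:
  assumes e: "eps > 0" and X: "X \<in> triangles eps"
  obtains a b where "X = up eps a b" | a b where "X = down eps a b"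
proof -
  from X obtain x y z where "X = convex hull {x,y,z}" "x \<in> lattice eps" "y \<in> lattice eps" "z \<in> lattice eps"
    "dist x y = eps" "dist y z = eps" "dist x z = eps" unfolding triangles_def by blast
  thus ?thesis using tri_class[OF e] that by blast
qed

definition vert :: "real \<Rightarrow> pt set \<Rightarrow> pt set" where "vert eps X = lattice eps \<inter> X"

lemma vert_tri:
  assumes e: "eps > 0" and X: "X \<in> triangles eps"
  obtains x y z where "vert eps X = {x,y,z}" "x \<noteq> y" "y \<noteq> z" "x \<noteq> z"
    "dist x y = eps" "dist y z = eps" "dist x z = eps" "X = convex hull {x,y,z}"
    "x \<in> lattice eps" "y \<in> lattice eps" "z \<in> lattice eps"
proof -
  from X obtain x y z where h: "X = convex hull {x,y,z}" "x \<in> lattice eps" "y \<in> lattice eps" "z \<in> lattice eps"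
    "dist x y = eps" "dist y z = eps" "dist x z = eps" unfolding triangles_def by blast
  from tri_class[OF e h(2-7)] obtain a b where
    "({x,y,z} = upV eps a b \<and> convex hull {x,y,z} = up eps a b) \<or>
                ({x,y,z} = downV eps a b \<and> convex hull {x,y,z} = down eps a b)" by blast
  hence "vert eps X = {x,y,z}"
  proof (elim disjE conjE)
    assume h1: "{x,y,z} = upV eps a b" and h2: "convex hull {x,y,z} = up eps a b"
    show ?thesis unfolding vert_def h(1) h2 h1[symmetric] using latt_up[of eps a b] e h1 by simp
  next
    assume h1: "{x,y,z} = downV eps a b" and h2: "convex hull {x,y,z} = down eps a b"
    show ?thesis unfolding vert_def h(1) h2 h1[symmetric] using latt_down[of eps a b] e h1 by simp
  qed
  moreover have "x \<noteq> y" "y \<noteq> z" "x \<noteq> z" using h e by auto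
  ultimately show ?thesis using that h by blast
qed




lemma ih1: "(of_int x::real) < of_int y + 1 \<Longrightarrow> x \<le> y"
proof -
  assume "(of_int x::real) < of_int y + 1"
  hence "(of_int x::real) < of_int (y + 1)" by simp
  hence "x < y + 1" by (simp only: of_int_less_iff)
  thus ?thesis by simp
qed

lemma seg_coords: assumes e: "eps \<noteq> 0"
  shows "x \<in> closed_segment (L eps a b) (L eps c d) \<longleftrightarrow>
    (\<exists>w. 0 \<le> w \<and> w \<le> 1 \<and> cs eps x = of_int a + w * (of_int c - of_int a) \<and> ct eps x = of_int b + w * (of_int d - of_int b))"
proof
  assume "x \<in> closed_segment (L eps a b) (L eps c d)"
  then obtain w where xw: "x = (1 - w) *\<^sub>R L eps a b + w *\<^sub>R L eps c d" and w: "0 \<le> w" "w \<le> 1"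
    by (auto simp: in_segment)
  show "\<exists>w. 0 \<le> w \<and> w \<le> 1 \<and> cs eps x = of_int a + w * (of_int c - of_int a) \<and> ct eps x = of_int b + w * (of_int d - of_int b)"
    using e w by (intro exI[of _ w]) (simp add: xw algebra_simps)
next
  assume "\<exists>w. 0 \<le> w \<and> w \<le> 1 \<and> cs eps x = of_int a + w * (of_int c - of_int a) \<and> ct eps x = of_int b + w * (of_int d - of_int b)"
  then obtain w where h: "0 \<le> w" "w \<le> 1" "cs eps x = of_int a + w * (of_int c - of_int a)" "ct eps x = of_int b + w * (of_int d - of_int b)"
    by blast
  have "x = (1 - w) *\<^sub>R L eps a b + w *\<^sub>R L eps c d"
    by (rule pt_eq[OF e]) (use e h in \<open>simp_all add: algebra_simps\<close>)
  thus "x \<in> closed_segment (L eps a b) (L eps c d)" using h by (auto simp: in_segment)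
qed

lemma cs_mid[simp]: "cs eps (midpoint x y) = (cs eps x + cs eps y) / 2"
  by (simp add: midpoint_def)
lemma ct_mid[simp]: "ct eps (midpoint x y) = (ct eps x + ct eps y) / 2"
  by (simp add: midpoint_def)

definition MIDP where
  "MIDP eps p q \<longleftrightarrow> (\<exists>T1 T2. T1 \<in> triangles eps \<and> T2 \<in> triangles eps \<and> T1 \<noteq> T2 \<and>
     T1 \<inter> T2 = closed_segment p q \<and>
     (\<forall>Y\<in>triangles eps. midpoint p q \<in> Y \<longrightarrow> Y = T1 \<or> Y = T2))"

lemma MIDP_sym: "MIDP eps p q \<Longrightarrow> MIDP eps q p"
  unfolding MIDP_def by (metis closed_segment_commute midpoint_sym)

lemma mid_dir1: assumes e: "eps > 0" shows "MIDP eps (L eps a b) (L eps (a+1) b)"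
  unfolding MIDP_def
proof (intro exI conjI ballI impI)
  let ?p = "L eps a b" and ?q = "L eps (a+1) b"
  have e0: "eps \<noteq> 0" using e by simp
  show "up eps a b \<in> triangles eps" "down eps a (b-1) \<in> triangles eps"
    using e by (simp_all add: up_tri down_tri)
  have "L eps a (b+1) \<in> up eps a b" "L eps a (b+1) \<notin> down eps a (b-1)"
    using e0 by (simp_all add: mem_up mem_down)
  thus "up eps a b \<noteq> down eps a (b-1)" by blast
  show "up eps a b \<inter> down eps a (b-1) = closed_segment ?p ?q"
  proof (rule set_eqI)
    fix x
    show "x \<in> up eps a b \<inter> down eps a (b-1) \<longleftrightarrow> x \<in> closed_segment ?p ?q"
      unfolding seg_coords[OF e0] using e0
      apply (simp add: mem_up mem_down)
      apply (rule iffI)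
       apply (rule exI[of _ "cs eps x - a"]) apply simp
      apply (elim exE conjE) apply simp
      done
  qed
  fix Y assume Y: "Y \<in> triangles eps" and m: "midpoint ?p ?q \<in> Y"
  show "Y = up eps a b \<or> Y = down eps a (b-1)"
  proof (cases rule: triE[OF e Y])
    case (1 a' b')
    have h: "of_int a' \<le> (2 * of_int a + 1) / (2::real)" "of_int b' \<le> (of_int b::real)"
       "(2 * of_int a + 1) / 2 + of_int b \<le> (of_int a' + of_int b' + 1::real)"
      using m e0 by (simp_all add: 1 mem_up)
    have "real_of_int a' < of_int a + 1" using h by (simp add: field_simps)
    hence "a' \<le> a" by (rule ih1)
    moreover have "b' \<le> b" using h by simp
    moreover have "real_of_int (a + b) < of_int (a' + b') + 1" using h by (simp add: field_simps)
    hence "a + b \<le> a' + b'" by (rule ih1)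
    ultimately have "a' = a" "b' = b" by linarith+
    thus ?thesis using 1 by simp
  next
    case (2 a' b')
    have h: "(2 * of_int a + 1) / (2::real) \<le> of_int a' + 1" "(of_int b::real) \<le> of_int b' + 1"
       "of_int a' + of_int b' + 1 \<le> (2 * of_int a + 1) / 2 + (of_int b::real)"
      using m e0 by (simp_all add: 2 mem_down)
    have "real_of_int a < of_int a' + 1" using h by (simp add: field_simps)
    hence "a \<le> a'" by (rule ih1)
    moreover have "b - 1 \<le> b'" using h by simp
    moreover have "real_of_int (a' + b') < of_int (a + b - 1) + 1" using h by (simp add: field_simps)
    hence "a' + b' \<le> a + b - 1" by (rule ih1)
    ultimately have "a' = a" "b' = b - 1" by linarith+
    thus ?thesis using 2 by simp
  qed
qed

lemma mid_dir2: assumes e: "eps > 0" shows "MIDP eps (L eps a b) (L eps a (b+1))"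
  unfolding MIDP_def
proof (intro exI conjI ballI impI)
  let ?p = "L eps a b" and ?q = "L eps a (b+1)"
  have e0: "eps \<noteq> 0" using e by simp
  show "up eps a b \<in> triangles eps" "down eps (a-1) b \<in> triangles eps"
    using e by (simp_all add: up_tri down_tri)
  have "L eps (a+1) b \<in> up eps a b" "L eps (a+1) b \<notin> down eps (a-1) b"
    using e0 by (simp_all add: mem_up mem_down)
  thus "up eps a b \<noteq> down eps (a-1) b" by blast
  show "up eps a b \<inter> down eps (a-1) b = closed_segment ?p ?q"
  proof (rule set_eqI)
    fix x
    show "x \<in> up eps a b \<inter> down eps (a-1) b \<longleftrightarrow> x \<in> closed_segment ?p ?q"
      unfolding seg_coords[OF e0] using e0
      apply (simp add: mem_up mem_down)
      apply (rule iffI)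
       apply (rule exI[of _ "ct eps x - b"]) apply simp
      apply (elim exE conjE) apply simp
      done
  qed
  fix Y assume Y: "Y \<in> triangles eps" and m: "midpoint ?p ?q \<in> Y"
  show "Y = up eps a b \<or> Y = down eps (a-1) b"
  proof (cases rule: triE[OF e Y])
    case (1 a' b')
    have h: "of_int a' \<le> (of_int a::real)" "of_int b' \<le> (2 * of_int b + 1) / (2::real)"
       "of_int a + (2 * of_int b + 1) / 2 \<le> (of_int a' + of_int b' + 1::real)"
      using m e0 by (simp_all add: 1 mem_up)
    have "a' \<le> a" using h by simp
    moreover have "real_of_int b' < of_int b + 1" using h by (simp add: field_simps)
    hence "b' \<le> b" by (rule ih1)
    moreover have "real_of_int (a + b) < of_int (a' + b') + 1" using h by (simp add: field_simps)
    hence "a + b \<le> a' + b'" by (rule ih1)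
    ultimately have "a' = a" "b' = b" by linarith+
    thus ?thesis using 1 by simp
  next
    case (2 a' b')
    have h: "(of_int a::real) \<le> of_int a' + 1" "(2 * of_int b + 1) / (2::real) \<le> of_int b' + 1"
       "of_int a' + of_int b' + 1 \<le> of_int a + (2 * of_int b + 1) / (2::real)"
      using m e0 by (simp_all add: 2 mem_down)
    have "a \<le> a' + 1" using h by simp
    moreover have "real_of_int b < of_int b' + 1" using h by (simp add: field_simps)
    hence "b \<le> b'" by (rule ih1)
    moreover have "real_of_int (a' + b') < of_int (a + b - 1) + 1" using h by (simp add: field_simps)
    hence "a' + b' \<le> a + b - 1" by (rule ih1)
    ultimately have "a' = a - 1" "b' = b" by linarith+
    thus ?thesis using 2 by simp
  qed
qed

lemma mid_dir3: assumes e: "eps > 0" shows "MIDP eps (L eps a b) (L eps (a-1) (b+1))"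
  unfolding MIDP_def
proof (intro exI conjI ballI impI)
  let ?p = "L eps a b" and ?q = "L eps (a-1) (b+1)"
  have e0: "eps \<noteq> 0" using e by simp
  show "up eps (a-1) b \<in> triangles eps" "down eps (a-1) b \<in> triangles eps"
    using e by (simp_all add: up_tri down_tri)
  have "L eps (a-1) b \<in> up eps (a-1) b" "L eps (a-1) b \<notin> down eps (a-1) b"
    using e0 by (simp_all add: mem_up mem_down)
  thus "up eps (a-1) b \<noteq> down eps (a-1) b" by blast
  show "up eps (a-1) b \<inter> down eps (a-1) b = closed_segment ?p ?q"
  proof (rule set_eqI)
    fix x
    show "x \<in> up eps (a-1) b \<inter> down eps (a-1) b \<longleftrightarrow> x \<in> closed_segment ?p ?q"
      unfolding seg_coords[OF e0] using e0
      apply (simp add: mem_up mem_down)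
      apply (rule iffI)
       apply (rule exI[of _ "a - cs eps x"]) apply simp
      apply (elim exE conjE) apply simp
      done
  qed
  fix Y assume Y: "Y \<in> triangles eps" and m: "midpoint ?p ?q \<in> Y"
  show "Y = up eps (a-1) b \<or> Y = down eps (a-1) b"
  proof (cases rule: triE[OF e Y])
    case (1 a' b')
    have h: "of_int a' \<le> (2 * of_int a - 1) / (2::real)" "of_int b' \<le> (2 * of_int b + 1) / (2::real)"
       "(2 * of_int a - 1) / 2 + (2 * of_int b + 1) / 2 \<le> (of_int a' + of_int b' + 1::real)"
      using m e0 by (simp_all add: 1 mem_up)
    have "real_of_int a' < of_int (a - 1) + 1" using h by (simp add: field_simps)
    hence "a' \<le> a - 1" by (rule ih1)
    moreover have "real_of_int b' < of_int b + 1" using h by (simp add: field_simps)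
    hence "b' \<le> b" by (rule ih1)
    moreover have "real_of_int (a + b - 1) < of_int (a' + b') + 1" using h by (simp add: field_simps)
    hence "a + b - 1 \<le> a' + b'" by (rule ih1)
    ultimately have "a' = a - 1" "b' = b" by linarith+
    thus ?thesis using 1 by simp
  next
    case (2 a' b')
    have h: "(2 * of_int a - 1) / (2::real) \<le> of_int a' + 1" "(2 * of_int b + 1) / (2::real) \<le> of_int b' + 1"
       "of_int a' + of_int b' + 1 \<le> (2 * of_int a - 1) / 2 + (2 * of_int b + 1) / (2::real)"
      using m e0 by (simp_all add: 2 mem_down)
    have "real_of_int (a - 1) < of_int a' + 1" using h by (simp add: field_simps)
    hence "a - 1 \<le> a'" by (rule ih1)
    moreover have "real_of_int b < of_int b' + 1" using h by (simp add: field_simps)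
    hence "b \<le> b'" by (rule ih1)
    moreover have "real_of_int (a' + b') < of_int (a + b - 1) + 1" using h by (simp add: field_simps)
    hence "a' + b' \<le> a + b - 1" by (rule ih1)
    ultimately have "a' = a - 1" "b' = b" by linarith+
    thus ?thesis using 2 by simp
  qed
qed

lemma MIDP_all:
  assumes e: "eps > 0" and p: "p \<in> lattice eps" and q: "q \<in> lattice eps" and d: "dist p q = eps"
  shows "MIDP eps p q"
proof -
  obtain a b where pa: "p = L eps a b" using lattice_E[OF p] by blast
  obtain c d where qc: "q = L eps c d" using lattice_E[OF q] by blast
  have "(a-c)^2 + (a-c)*(b-d) + (b-d)^2 = 1" using d e by (simp add: pa qc dist_L)
  hence "(c,d) \<in> {(a-1,b),(a,b-1),(a+1,b-1),(a+1,b),(a,b+1),(a-1,b+1)}" by (rule nb6)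
  thus ?thesis
  proof (elim insertE emptyE)
    assume "(c,d) = (a-1,b)"
    thus ?thesis using MIDP_sym[OF mid_dir1[OF e, of "a-1" b]] by (simp add: pa qc)
  next
    assume "(c,d) = (a,b-1)"
    thus ?thesis using MIDP_sym[OF mid_dir2[OF e, of a "b-1"]] by (simp add: pa qc)
  next
    assume "(c,d) = (a+1,b-1)"
    thus ?thesis using MIDP_sym[OF mid_dir3[OF e, of "a+1" "b-1"]] by (simp add: pa qc)
  next
    assume "(c,d) = (a+1,b)"
    thus ?thesis using mid_dir1[OF e, of a b] by (simp add: pa qc)
  next
    assume "(c,d) = (a,b+1)"
    thus ?thesis using mid_dir2[OF e, of a b] by (simp add: pa qc)
  next
    assume "(c,d) = (a-1,b+1)"
    thus ?thesis using mid_dir3[OF e, of a b] by (simp add: pa qc)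
  qed
qed




lemma strict_up:
  assumes e: "eps > 0" and h: "of_int a < cs eps y" "of_int b < ct eps y" "cs eps y + ct eps y < of_int a + of_int b + 1"
    and Y: "Y \<in> triangles eps" "y \<in> Y"
  shows "Y = up eps a b"
proof (cases rule: triE[OF e Y(1)])
  case (1 a' b')
  have e0: "eps \<noteq> 0" using e by simp
  have g: "of_int a' \<le> cs eps y" "of_int b' \<le> ct eps y" "cs eps y + ct eps y \<le> of_int a' + of_int b' + 1"
    using Y(2) e0 by (simp_all add: 1 mem_up)
  have "real_of_int a' < of_int a + 1" using g h by linarith
  hence "a' \<le> a" by (rule ih1)
  moreover have "real_of_int b' < of_int b + 1" using g h by linarith
  hence "b' \<le> b" by (rule ih1)
  moreover have "real_of_int (a + b) < of_int (a' + b') + 1" using g h by simp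
  hence "a + b \<le> a' + b'" by (rule ih1)
  ultimately have "a' = a" "b' = b" by linarith+
  thus ?thesis using 1 by simp
next
  case (2 a' b')
  have e0: "eps \<noteq> 0" using e by simp
  have g: "cs eps y \<le> of_int a' + 1" "ct eps y \<le> of_int b' + 1" "of_int a' + of_int b' + 1 \<le> cs eps y + ct eps y"
    using Y(2) e0 by (simp_all add: 2 mem_down)
  have "real_of_int a < of_int a' + 1" using g h by linarith
  hence "a \<le> a'" by (rule ih1)
  moreover have "real_of_int b < of_int b' + 1" using g h by linarith
  hence "b \<le> b'" by (rule ih1)
  moreover have "real_of_int (a' + b' + 1) < of_int (a + b) + 1" using g h by simp
  hence "a' + b' + 1 \<le> a + b" by (rule ih1)
  ultimately show ?thesis by linarith
qed

lemma strict_down: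
  assumes e: "eps > 0" and h: "cs eps y < of_int a + 1" "ct eps y < of_int b + 1" "of_int a + of_int b + 1 < cs eps y + ct eps y"
    and Y: "Y \<in> triangles eps" "y \<in> Y"
  shows "Y = down eps a b"
proof (cases rule: triE[OF e Y(1)])
  case (1 a' b')
  have e0: "eps \<noteq> 0" using e by simp
  have g: "of_int a' \<le> cs eps y" "of_int b' \<le> ct eps y" "cs eps y + ct eps y \<le> of_int a' + of_int b' + 1"
    using Y(2) e0 by (simp_all add: 1 mem_up)
  have "real_of_int a' < of_int a + 1" using g h by linarith
  hence "a' \<le> a" by (rule ih1)
  moreover have "real_of_int b' < of_int b + 1" using g h by linarith
  hence "b' \<le> b" by (rule ih1)
  moreover have "real_of_int (a + b + 1) < of_int (a' + b') + 1" using g h by simp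
  hence "a + b + 1 \<le> a' + b'" by (rule ih1)
  ultimately show ?thesis by linarith
next
  case (2 a' b')
  have e0: "eps \<noteq> 0" using e by simp
  have g: "cs eps y \<le> of_int a' + 1" "ct eps y \<le> of_int b' + 1" "of_int a' + of_int b' + 1 \<le> cs eps y + ct eps y"
    using Y(2) e0 by (simp_all add: 2 mem_down)
  have "real_of_int a < of_int a' + 1" using g h by linarith
  hence "a \<le> a'" by (rule ih1)
  moreover have "real_of_int b < of_int b' + 1" using g h by linarith
  hence "b \<le> b'" by (rule ih1)
  moreover have "real_of_int (a' + b') < of_int (a + b) + 1" using g h by simp
  hence "a' + b' \<le> a + b" by (rule ih1)
  ultimately have "a' = a" "b' = b" by linarith+
  thus ?thesis using 2 by simp
qed

lemma convex_lt: "(x::real) \<ge> a \<Longrightarrow> 0 < d \<Longrightarrow> d < 1 \<Longrightarrow> c > a \<Longrightarrow> (1-d)*x + d*c > a"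
proof -
  assume h: "x \<ge> a" "0 < d" "d < 1" "c > a"
  have "(1-d)*a \<le> (1-d)*x" using h by (intro mult_left_mono) auto
  moreover have "d*a < d*c" using h by (intro mult_strict_left_mono) auto
  ultimately have "(1-d)*a + d*a < (1-d)*x + d*c" by linarith
  thus ?thesis by (simp add: algebra_simps)
qed

lemma convex_gt: "(x::real) \<le> a \<Longrightarrow> 0 < d \<Longrightarrow> d < 1 \<Longrightarrow> c < a \<Longrightarrow> (1-d)*x + d*c < a"
proof -
  assume h: "x \<le> a" "0 < d" "d < 1" "c < a"
  have "(1-d)*x \<le> (1-d)*a" using h by (intro mult_left_mono) auto
  moreover have "d*c < d*a" using h by (intro mult_strict_left_mono) auto
  ultimately have "(1-d)*x + d*c < (1-d)*a + d*a" by linarith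
  thus ?thesis by (simp add: algebra_simps)
qed

lemma approach:
  fixes x c :: pt assumes r: "r > 0"
  shows "\<exists>d. 0 < d \<and> d < 1 \<and> dist x (x + d *\<^sub>R (c - x)) < r"
proof -
  let ?n = "norm (c - x)"
  define d where "d = min (1/2) (r / (2 * (?n + 1)))"
  have n0: "?n \<ge> 0" by simp
  have "2 * (?n + 1) > 0" using n0 by (intro mult_pos_pos add_nonneg_pos) auto
  hence "r / (2 * (?n + 1)) > 0" using r by (intro divide_pos_pos)
  hence d0: "d > 0" unfolding d_def by simp
  have d1: "d < 1" by (simp add: d_def)
  have "d \<le> r / (2 * (?n + 1))" by (simp add: d_def)
  hence "d * (2 * (?n + 1)) \<le> r" using n0 by (simp add: field_simps)
  moreover have "?n < 2 * (?n + 1)" using n0 by (smt (verit))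
  hence "d * ?n < d * (2 * (?n + 1))" using d0 by (intro mult_strict_left_mono) auto
  ultimately have "d * ?n < r" by linarith
  moreover have "dist x (x + d *\<^sub>R (c - x)) = d * ?n" using d0 by (simp add: dist_norm)
  ultimately show ?thesis using d0 d1 by auto
qed

lemma int_pt:
  assumes e: "eps > 0" and X: "X \<in> triangles eps" and x: "x \<in> X" and r: "r > 0"
  shows "\<exists>y. dist x y < r \<and> y \<in> X \<and> (\<forall>Y\<in>triangles eps. y \<in> Y \<longrightarrow> Y = X)"
proof -
  have e0: "eps \<noteq> 0" using e by simp
  show ?thesis
  proof (cases rule: triE[OF e X])
    case (1 a b)
    let ?c = "Q eps (of_int a + 1/3) (of_int b + 1/3)"
    obtain d where d: "0 < d" "d < 1" "dist x (x + d *\<^sub>R (?c - x)) < r" using approach[OF r] by blast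
    let ?y = "x + d *\<^sub>R (?c - x)"
    have g: "of_int a \<le> cs eps x" "of_int b \<le> ct eps x" "cs eps x + ct eps x \<le> of_int a + of_int b + 1"
      using x e0 by (simp_all add: 1 mem_up)
    have cy: "cs eps ?y = (1 - d) * cs eps x + d * (of_int a + 1/3)"
         "ct eps ?y = (1 - d) * ct eps x + d * (of_int b + 1/3)"
      using e0 by (simp_all add: algebra_simps)
    have s1: "of_int a < cs eps ?y" unfolding cy using g d by (intro convex_lt) auto
    have s2: "of_int b < ct eps ?y" unfolding cy using g d by (intro convex_lt) auto
    have "cs eps ?y + ct eps ?y = (1 - d) * (cs eps x + ct eps x) + d * (of_int a + of_int b + 2/3)"
      unfolding cy by (simp add: algebra_simps)
    also have "\<dots> < of_int a + of_int b + 1" using g d by (intro convex_gt) auto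
    finally have s3: "cs eps ?y + ct eps ?y < of_int a + of_int b + 1" .
    have "?y \<in> X" using e0 s1 s2 s3 by (simp add: 1 mem_up)
    moreover have "\<forall>Y\<in>triangles eps. ?y \<in> Y \<longrightarrow> Y = X"
      using strict_up[OF e s1 s2 s3] 1 by blast
    ultimately show ?thesis using d by blast
  next
    case (2 a b)
    let ?c = "Q eps (of_int a + 2/3) (of_int b + 2/3)"
    obtain d where d: "0 < d" "d < 1" "dist x (x + d *\<^sub>R (?c - x)) < r" using approach[OF r] by blast
    let ?y = "x + d *\<^sub>R (?c - x)"
    have g: "cs eps x \<le> of_int a + 1" "ct eps x \<le> of_int b + 1" "of_int a + of_int b + 1 \<le> cs eps x + ct eps x"
      using x e0 by (simp_all add: 2 mem_down)
    have cy: "cs eps ?y = (1 - d) * cs eps x + d * (of_int a + 2/3)"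
         "ct eps ?y = (1 - d) * ct eps x + d * (of_int b + 2/3)"
      using e0 by (simp_all add: algebra_simps)
    have s1: "cs eps ?y < of_int a + 1" unfolding cy using g d by (intro convex_gt) auto
    have s2: "ct eps ?y < of_int b + 1" unfolding cy using g d by (intro convex_gt) auto
    have "cs eps ?y + ct eps ?y = (1 - d) * (cs eps x + ct eps x) + d * (of_int a + of_int b + 4/3)"
      unfolding cy by (simp add: algebra_simps)
    also have "\<dots> > of_int a + of_int b + 1" using g d by (intro convex_lt) auto
    finally have s3: "of_int a + of_int b + 1 < cs eps ?y + ct eps ?y" .
    have "?y \<in> X" using e0 s1 s2 s3 by (simp add: 2 mem_down)
    moreover have "\<forall>Y\<in>triangles eps. ?y \<in> Y \<longrightarrow> Y = X"
      using strict_down[OF e s1 s2 s3] 2 by blast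
    ultimately show ?thesis using d by blast
  qed
qed




definition leafy :: "('a \<Rightarrow> 'a \<Rightarrow> bool) \<Rightarrow> 'a \<Rightarrow> bool" where
  "leafy H X \<longleftrightarrow> (\<exists>Z. \<forall>Y. H X Y \<longrightarrow> Y = Z)"

lemma shortest_path:
  assumes "H\<^sup>*\<^sup>* A B"
  shows "\<exists>n f. f 0 = A \<and> f n = B \<and> (\<forall>i<n. H (f i) (f (Suc i))) \<and> inj_on f {..n}"
proof -
  have "\<exists>n. \<exists>f. f 0 = A \<and> f n = B \<and> (\<forall>i<n. H (f i) (f (Suc i)))"
    using assms by (metis rtranclp_imp_relpowp relpowp_fun_conv)
  then obtain n where ex: "\<exists>f. f 0 = A \<and> f n = B \<and> (\<forall>i<n. H (f i) (f (Suc i)))"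
    and mn: "\<And>m. m < n \<Longrightarrow> \<not> (\<exists>f. f 0 = A \<and> f m = B \<and> (\<forall>i<m. H (f i) (f (Suc i))))"
    using exists_least_iff[of "\<lambda>n. \<exists>f. f 0 = A \<and> f n = B \<and> (\<forall>i<n. H (f i) (f (Suc i)))"]
    by blast
  obtain f where f: "f 0 = A" "f n = B" "\<forall>i<n. H (f i) (f (Suc i))" using ex by blast
  have "inj_on f {..n}"
  proof (rule inj_onI, rule ccontr)
    fix i j assume i: "i \<in> {..n}" and j: "j \<in> {..n}" and eq: "f i = f j" and ne: "i \<noteq> j"
    have "\<exists>i j. i < j \<and> j \<le> n \<and> f i = f j"
    proof (cases "i < j")
      case True thus ?thesis using j eq by auto
    next
      case False thus ?thesis using i ne eq by (intro exI[of _ j] exI[of _ i]) auto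
    qed
    then obtain i j where ij: "i < j" "j \<le> n" "f i = f j" by blast
    define g where "g k = (if k \<le> i then f k else f (k + (j - i)))" for k
    have "g 0 = A" using f by (simp add: g_def)
    moreover have "g (n - (j - i)) = B"
    proof (cases "n - (j - i) \<le> i")
      case True
      hence "j = n" using ij by simp
      thus ?thesis using True f ij by (simp add: g_def)
    next
      case False
      thus ?thesis using f ij by (simp add: g_def)
    qed
    moreover have "\<forall>k < n - (j - i). H (g k) (g (Suc k))"
    proof (intro allI impI)
      fix k assume k: "k < n - (j - i)"
      show "H (g k) (g (Suc k))"
      proof (cases "k < i")
        case True thus ?thesis using f(3) ij k by (simp add: g_def)
      next
        case False
        show ?thesis
        proof (cases "k = i")
          case True
          have "H (f j) (f (Suc j))" using f(3) ij k True by simp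
          thus ?thesis using True ij by (simp add: g_def)
        next
          case False
          hence "k > i" using \<open>\<not> k < i\<close> by simp
          have "H (f (k + (j - i))) (f (Suc (k + (j - i))))" using f(3) ij k by simp
          thus ?thesis using \<open>k > i\<close> by (simp add: g_def)
        qed
      qed
    qed
    moreover have "n - (j - i) < n" using ij by simp
    ultimately show False using mn by blast
  qed
  thus ?thesis using f by blast
qed

lemma graph3:
  assumes sym: "\<And>X Y. H X Y \<Longrightarrow> H Y X"
    and deg: "\<And>X. \<exists>Z1 Z2. \<forall>Y. H X Y \<longrightarrow> Y = Z1 \<or> Y = Z2"
    and lA: "leafy H A" and lB: "leafy H B" and lC: "leafy H C"
    and AB: "H\<^sup>*\<^sup>* A B" and AC: "H\<^sup>*\<^sup>* A C"
    and ne: "A \<noteq> B" "A \<noteq> C" "B \<noteq> C"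
  shows False
proof -
  obtain n f where f: "f 0 = A" "f n = B" "\<forall>i<n. H (f i) (f (Suc i))" "inj_on f {..n}"
    using shortest_path[OF AB] by blast
  obtain m g where g: "g 0 = A" "g m = C" "\<forall>i<m. H (g i) (g (Suc i))" "inj_on g {..m}"
    using shortest_path[OF AC] by blast
  have pre: "\<forall>k. k \<le> n \<and> k \<le> m \<longrightarrow> f k = g k"
  proof (intro allI)
    fix k show "k \<le> n \<and> k \<le> m \<longrightarrow> f k = g k"
    proof (induction k rule: nat_less_induct)
      case (1 k)
      show ?case
      proof (intro impI, elim conjE)
        assume kn: "k \<le> n" and km: "k \<le> m"
        show "f k = g k"
        proof (cases k)
          case 0 thus ?thesis using f g by simp
        next
          case (Suc k1)
          show ?thesis
          proof (cases k1)
            case 0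
            from lA obtain Z where Z: "\<forall>Y. H A Y \<longrightarrow> Y = Z" unfolding leafy_def by blast
            have "H A (f 1)" using f kn Suc 0 by (metis One_nat_def Suc_le_lessD)
            moreover have "H A (g 1)" using g km Suc 0 by (metis One_nat_def Suc_le_lessD)
            ultimately have "f 1 = g 1" using Z by blast
            thus ?thesis using Suc 0 by simp
          next
            case (Suc k2)
            have IH1: "f k1 = g k1" "f k2 = g k2" using 1 kn km \<open>k = Suc k1\<close> Suc by auto
            obtain Z1 Z2 where Z: "\<forall>Y. H (f k1) Y \<longrightarrow> Y = Z1 \<or> Y = Z2" using deg by blast
            have h1: "H (f k1) (f k)" using f(3) kn \<open>k = Suc k1\<close> by simp
            have h2: "H (f k1) (g k)" using g(3) km \<open>k = Suc k1\<close> IH1 by simp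
            have h3: "H (f k1) (f k2)" using sym f(3) kn \<open>k = Suc k1\<close> Suc by simp
            have n1: "f k \<noteq> f k2" using f(4) kn \<open>k = Suc k1\<close> Suc by (auto dest: inj_onD)
            have n2: "g k \<noteq> g k2" using g(4) km \<open>k = Suc k1\<close> Suc by (auto dest: inj_onD)
            show ?thesis using Z h1 h2 h3 n1 n2 IH1 by metis
          qed
        qed
      qed
    qed
  qed
  have gen: "False" if n_le: "n \<le> m" and
      f: "f 0 = A" "f n = B" "inj_on f {..n}"
      and g: "g 0 = A" "g m = C" "\<forall>i<m. H (g i) (g (Suc i))" "inj_on g {..m}"
      and pre: "\<forall>k. k \<le> n \<and> k \<le> m \<longrightarrow> f k = g k"
      and lB: "leafy H B" and ne: "A \<noteq> B" "B \<noteq> C"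
    for n m f g B C
  proof (cases "n = m")
    case True thus False using pre f g ne by auto
  next
    case False
    hence nm: "n < m" using n_le by simp
    have n0: "n > 0" using f ne by (cases n) auto
    have gB: "g n = B" using pre f n_le by auto
    from lB obtain Z where Z: "\<forall>Y. H B Y \<longrightarrow> Y = Z" unfolding leafy_def by blast
    have "H B (g (Suc n))" using g(3) nm gB by auto
    moreover have "H (g (n - 1)) (g (Suc (n - 1)))" using g(3) nm by simp
    hence "H (g (n - 1)) (g n)" using n0 by simp
    hence "H B (g (n - 1))" using sym gB by simp
    ultimately have "g (Suc n) = g (n - 1)" using Z by blast
    moreover have "Suc n \<noteq> n - 1" by simp
    ultimately show False using g(4) nm by (auto dest: inj_onD)
  qed
  show False
  proof (cases "n \<le> m")
    case True show False by (rule gen[OF True f(1) f(2) f(4) g pre lB ne(1) ne(3)])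
  next
    case False
    hence mn: "m \<le> n" by simp
    have pre': "\<forall>k. k \<le> m \<and> k \<le> n \<longrightarrow> g k = f k" using pre by simp
    have ne': "C \<noteq> B" using ne(3) by simp
    show False by (rule gen[OF mn g(1) g(2) g(4) f pre' lC ne(2) ne'])
  qed
qed




lemma SF_nz: "u \<in> SF eps \<Omega> \<Longrightarrow> i \<in> lattice eps \<Longrightarrow> u i \<noteq> 0"
  unfolding SF_def by auto

lemma SF_nneg: assumes "u \<in> SF eps \<Omega>" "i \<in> lattice eps" shows "u i \<noteq> - u i"
proof
  assume h: "u i = - u i"
  have "u i + u i = 0" using h by (metis add.right_inverse)
  hence "(2::real) *\<^sub>R u i = 0" by (simp add: scaleR_2)
  hence "u i = 0" by simp
  thus False using SF_nz[OF assms] by simp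
qed

lemma nb_sym: "neighbours eps u X Y \<Longrightarrow> neighbours eps u Y X"
  unfolding neighbours_def by (simp add: Int_commute)

lemma nb_edge: "neighbours eps u X Y \<Longrightarrow> \<exists>p q. p \<in> lattice eps \<and> q \<in> lattice eps \<and>
   dist p q = eps \<and> u p = - u q \<and> X \<inter> Y = closed_segment p q"
  unfolding neighbours_def Nedges_def by blast

lemma nb_tri: "neighbours eps u X Y \<Longrightarrow> X \<in> triangles eps \<and> Y \<in> triangles eps"
  unfolding neighbours_def by blast

lemma tri_convex: "X \<in> triangles eps \<Longrightarrow> convex X"
  unfolding triangles_def by (auto simp: convex_convex_hull)

lemma tri_not_seg:
  assumes e: "eps > 0" and X: "X \<in> triangles eps" and p: "p \<in> lattice eps" and q: "q \<in> lattice eps"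
    and d: "dist p q = eps"
  shows "X \<noteq> closed_segment p q"
proof
  assume Xs: "X = closed_segment p q"
  obtain T1 T2 where T: "T1 \<in> triangles eps" "T2 \<in> triangles eps" "T1 \<noteq> T2"
     "T1 \<inter> T2 = closed_segment p q" using MIDP_all[OF e p q d] unfolding MIDP_def by blast
  have "p \<in> X" using Xs by simp
  from int_pt[OF e X this, of 1] obtain y where y: "y \<in> X" "\<forall>Y\<in>triangles eps. y \<in> Y \<longrightarrow> Y = X"
    by auto
  have "y \<in> T1" "y \<in> T2" using y(1) Xs T(4) by auto
  hence "T1 = X" "T2 = X" using y(2) T by auto
  thus False using T(3) by simp
qed

lemma nb_irrefl: "eps > 0 \<Longrightarrow> neighbours eps u X Y \<Longrightarrow> X \<noteq> Y"
proof
  assume e: "eps > 0" and n: "neighbours eps u X Y" and eq: "X = Y"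
  from nb_edge[OF n] obtain p q where pq: "p \<in> lattice eps" "q \<in> lattice eps" "dist p q = eps"
     "X \<inter> Y = closed_segment p q" by blast
  have "X = closed_segment p q" using pq(4) eq by simp
  thus False using tri_not_seg[OF e _ pq(1-3)] nb_tri[OF n] by blast
qed

lemma across:
  assumes e: "eps > 0" and X: "X \<in> triangles eps" and p: "p \<in> lattice eps" and q: "q \<in> lattice eps"
    and d: "dist p q = eps" and pX: "p \<in> X" and qX: "q \<in> X"
  shows "\<exists>Z. \<forall>Y\<in>triangles eps. p \<in> Y \<and> q \<in> Y \<longrightarrow> Y = X \<or> Y = Z"
proof -
  obtain T1 T2 where T: "T1 \<in> triangles eps" "T2 \<in> triangles eps"
     "\<forall>Y\<in>triangles eps. midpoint p q \<in> Y \<longrightarrow> Y = T1 \<or> Y = T2"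
     using MIDP_all[OF e p q d] unfolding MIDP_def by blast
  have mY: "midpoint p q \<in> Y" if "Y \<in> triangles eps" "p \<in> Y" "q \<in> Y" for Y
    using closed_segment_subset[OF that(2,3) tri_convex[OF that(1)]] midpoint_in_closed_segment by blast
  have "X = T1 \<or> X = T2" using T(3) mY[OF X pX qX] X by blast
  thus ?thesis
  proof
    assume "X = T1" thus ?thesis using T(3) mY by (intro exI[of _ T2]) blast
  next
    assume "X = T2" thus ?thesis using T(3) mY by (intro exI[of _ T1]) blast
  qed
qed

definition NV :: "real \<Rightarrow> (pt \<Rightarrow> spin) \<Rightarrow> pt set \<Rightarrow> spin set" where
  "NV eps u X = {u p | p. p \<in> vert eps X \<and> (\<exists>q \<in> vert eps X. u q = - u p)}"

lemma three:
  assumes "x \<noteq> y" "y \<noteq> z" "x \<noteq> z" "p \<in> {x,y,z}" "q \<in> {x,y,z}" "p \<noteq> q"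
  shows "\<exists>r. {x,y,z} = {p,q,r} \<and> r \<noteq> p \<and> r \<noteq> q"
  using assms by auto

lemma NV_edge:
  assumes e: "eps > 0" and u: "u \<in> SF eps \<Omega>" and X: "X \<in> triangles eps"
    and p: "p \<in> vert eps X" and q: "q \<in> vert eps X" and pq: "p \<noteq> q" and n: "u p = - u q"
  shows "NV eps u X = {u p, u q}"
proof -
  obtain x y z where v: "vert eps X = {x,y,z}" "x \<noteq> y" "y \<noteq> z" "x \<noteq> z"
    using vert_tri[OF e X] by metis
  obtain r where r: "vert eps X = {p,q,r}" "r \<noteq> p" "r \<noteq> q"
    using three[OF v(2-4), of p q] p q pq v(1) by auto
  have rl: "r \<in> lattice eps" using r(1) unfolding vert_def by auto
  have n': "u q = - u p" using n by simp
  show ?thesis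
  proof
    show "{u p, u q} \<subseteq> NV eps u X" unfolding NV_def using p q n n' by blast
    show "NV eps u X \<subseteq> {u p, u q}"
    proof
      fix w assume "w \<in> NV eps u X"
      then obtain a b where ab: "w = u a" "a \<in> vert eps X" "b \<in> vert eps X" "u b = - u a"
        unfolding NV_def by blast
      show "w \<in> {u p, u q}"
      proof (cases "a = r")
        case False thus ?thesis using ab r by auto
      next
        case True
        have "b = p \<or> b = q \<or> b = r" using ab(3) r(1) by auto
        moreover have "u r \<noteq> - u r" using SF_nneg[OF u rl] .
        ultimately show ?thesis using ab True n n' by auto
      qed
    qed
  qed
qed

lemma nb_vert:
  assumes e: "eps > 0" and n: "neighbours eps u X Y"
  shows "\<exists>p q. p \<in> vert eps X \<and> q \<in> vert eps X \<and> p \<in> vert eps Y \<and> q \<in> vert eps Y \<and>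
     p \<noteq> q \<and> u p = - u q \<and> dist p q = eps"
proof -
  from nb_edge[OF n] obtain p q where pq: "p \<in> lattice eps" "q \<in> lattice eps" "dist p q = eps"
     "u p = - u q" "X \<inter> Y = closed_segment p q" by blast
  have "p \<in> X \<inter> Y" "q \<in> X \<inter> Y" using pq(5) by auto
  moreover have "p \<noteq> q" using pq(3) e by auto
  ultimately show ?thesis using pq unfolding vert_def by blast
qed

lemma NV_nb:
  assumes e: "eps > 0" and u: "u \<in> SF eps \<Omega>" and n: "neighbours eps u X Y"
  shows "NV eps u X = NV eps u Y"
proof -
  obtain p q where pq: "p \<in> vert eps X" "q \<in> vert eps X" "p \<in> vert eps Y" "q \<in> vert eps Y"
     "p \<noteq> q" "u p = - u q" using nb_vert[OF e n] by blast
  show ?thesis using NV_edge[OF e u _ pq(1,2,5,6)] NV_edge[OF e u _ pq(3,4,5,6)] nb_tri[OF n] by simp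
qed

lemma NV_rt:
  assumes e: "eps > 0" and u: "u \<in> SF eps \<Omega>" and r: "(neighbours eps u)\<^sup>*\<^sup>* X Y"
  shows "NV eps u X = NV eps u Y"
  using r by (induction rule: rtranclp_induct) (auto dest: NV_nb[OF e u])

lemma negsym: "(a::spin) = - b \<Longrightarrow> b = - a" by simp

lemma nb_claim:
  assumes e: "eps > 0" and u: "u \<in> SF eps \<Omega>" and X: "X \<in> triangles eps"
    and v: "vert eps X = {x,y,z}" and dxy: "dist x y = eps" and dyz: "dist y z = eps" and dxz: "dist x z = eps"
  shows "\<exists>Zxy Zyz Zxz. \<forall>Y. neighbours eps u X Y \<longrightarrow>
     (Y = Zxy \<and> u x = - u y) \<or> (Y = Zyz \<and> u y = - u z) \<or> (Y = Zxz \<and> u x = - u z)"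
proof -
  have xyz: "x \<in> X" "y \<in> X" "z \<in> X" "x \<in> lattice eps" "y \<in> lattice eps" "z \<in> lattice eps"
    using v unfolding vert_def by blast+
  obtain Zxy where Zxy: "\<forall>Y\<in>triangles eps. x \<in> Y \<and> y \<in> Y \<longrightarrow> Y = X \<or> Y = Zxy"
    using across[OF e X xyz(4,5) dxy xyz(1,2)] by blast
  obtain Zyz where Zyz: "\<forall>Y\<in>triangles eps. y \<in> Y \<and> z \<in> Y \<longrightarrow> Y = X \<or> Y = Zyz"
    using across[OF e X xyz(5,6) dyz xyz(2,3)] by blast
  obtain Zxz where Zxz: "\<forall>Y\<in>triangles eps. x \<in> Y \<and> z \<in> Y \<longrightarrow> Y = X \<or> Y = Zxz"
    using across[OF e X xyz(4,6) dxz xyz(1,3)] by blast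
  show ?thesis
  proof (intro exI allI impI)
    fix Y assume n: "neighbours eps u X Y"
    obtain p q where pq: "p \<in> vert eps X" "q \<in> vert eps X" "p \<in> vert eps Y" "q \<in> vert eps Y"
     "p \<noteq> q" "u p = - u q" using nb_vert[OF e n] by blast
    have qp: "u q = - u p" using negsym[OF pq(6)] .
    have YX: "Y \<noteq> X" using nb_irrefl[OF e n] by simp
    have Yt: "Y \<in> triangles eps" using nb_tri[OF n] by simp
    have pY: "p \<in> Y" "q \<in> Y" using pq(3,4) unfolding vert_def by auto
    have "p \<in> {x,y,z}" "q \<in> {x,y,z}" using pq(1,2) v by auto
    hence "(x \<in> Y \<and> y \<in> Y \<and> u x = - u y) \<or> (y \<in> Y \<and> z \<in> Y \<and> u y = - u z) \<or>
           (x \<in> Y \<and> z \<in> Y \<and> u x = - u z)"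
      using pY pq(5,6) qp by auto
    thus "(Y = Zxy \<and> u x = - u y) \<or> (Y = Zyz \<and> u y = - u z) \<or> (Y = Zxz \<and> u x = - u z)"
      using Zxy Zyz Zxz Yt YX by blast
  qed
qed

lemma deg:
  assumes e: "eps > 0" and u: "u \<in> SF eps \<Omega>"
  shows "\<exists>Z1 Z2. \<forall>Y. neighbours eps u X Y \<longrightarrow> Y = Z1 \<or> Y = Z2"
proof (cases "X \<in> triangles eps")
  case False thus ?thesis using nb_tri by blast
next
  case X: True
  obtain x y z where v: "vert eps X = {x,y,z}" "dist x y = eps" "dist y z = eps" "dist x z = eps"
     "z \<in> lattice eps"
    using vert_tri[OF e X] by metis
  obtain Zxy Zyz Zxz where Z: "\<forall>Y. neighbours eps u X Y \<longrightarrow>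
     (Y = Zxy \<and> u x = - u y) \<or> (Y = Zyz \<and> u y = - u z) \<or> (Y = Zxz \<and> u x = - u z)"
    using nb_claim[OF e u X v(1-4)] by blast
  have "\<not> (u x = - u y \<and> u y = - u z \<and> u x = - u z)"
  proof
    assume h: "u x = - u y \<and> u y = - u z \<and> u x = - u z"
    hence "u z = - u z" by (metis minus_minus)
    thus False using SF_nneg[OF u v(5)] by simp
  qed
  thus ?thesis using Z by blast
qed

lemma allNV:
  assumes "\<forall>w\<in>vert eps X. \<exists>w'\<in>vert eps X. u w' = - u w"
  shows "u ` vert eps X \<subseteq> NV eps u X"
  using assms unfolding NV_def by blast

lemma leafy_of:
  assumes e: "eps > 0" and u: "u \<in> SF eps \<Omega>" and X: "X \<in> triangles eps"
    and nl: "\<not> (u ` vert eps X \<subseteq> NV eps u X)"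
  shows "leafy (neighbours eps u) X"
proof -
  obtain x y z where v: "vert eps X = {x,y,z}" "dist x y = eps" "dist y z = eps" "dist x z = eps"
    using vert_tri[OF e X] by metis
  obtain Zxy Zyz Zxz where Z: "\<forall>Y. neighbours eps u X Y \<longrightarrow>
     (Y = Zxy \<and> u x = - u y) \<or> (Y = Zyz \<and> u y = - u z) \<or> (Y = Zxz \<and> u x = - u z)"
    using nb_claim[OF e u X v(1-4)] by blast
  have a1: "\<not> (u x = - u y \<and> u y = - u z)"
  proof
    assume h: "u x = - u y \<and> u y = - u z"
    have "\<forall>w\<in>vert eps X. \<exists>w'\<in>vert eps X. u w' = - u w"
      unfolding v(1) using h negsym by blast
    thus False using allNV nl by blast
  qed
  have a2: "\<not> (u x = - u y \<and> u x = - u z)"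
  proof
    assume h: "u x = - u y \<and> u x = - u z"
    have "\<forall>w\<in>vert eps X. \<exists>w'\<in>vert eps X. u w' = - u w"
      unfolding v(1) using h negsym by blast
    thus False using allNV nl by blast
  qed
  have a3: "\<not> (u y = - u z \<and> u x = - u z)"
  proof
    assume h: "u y = - u z \<and> u x = - u z"
    have "\<forall>w\<in>vert eps X. \<exists>w'\<in>vert eps X. u w' = - u w"
      unfolding v(1) using h negsym by blast
    thus False using allNV nl by blast
  qed
  show ?thesis unfolding leafy_def
  proof (cases "u x = - u y")
    case True thus "\<exists>Z. \<forall>Y. neighbours eps u X Y \<longrightarrow> Y = Z" using Z a1 a2 by blast
  next
    case F1: False
    show "\<exists>Z. \<forall>Y. neighbours eps u X Y \<longrightarrow> Y = Z"
    proof (cases "u y = - u z")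
      case True thus ?thesis using Z a3 F1 by blast
    next
      case False thus ?thesis using Z F1 by blast
    qed
  qed
qed

lemma vert_two:
  assumes e: "eps > 0" and X: "X \<in> triangles eps" and i: "i \<in> vert eps X" and j: "j \<in> vert eps X"
    and ij: "i \<noteq> j"
  shows "\<exists>k. vert eps X = {i,j,k}"
proof -
  obtain x y z where v: "vert eps X = {x,y,z}" "x \<noteq> y" "y \<noteq> z" "x \<noteq> z"
    using vert_tri[OF e X] by metis
  show ?thesis using three[OF v(2-4), of i j] i j ij v(1) by auto
qed

lemma not_sub_NV:
  assumes e: "eps > 0" and u: "u \<in> SF eps \<Omega>" and X: "X \<in> triangles eps"
    and n: "neighbours eps u X Y" and i: "i \<in> vert eps X" and j: "j \<in> vert eps X"
    and uij: "u i \<noteq> u j" "u i \<noteq> - u j"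
  shows "\<not> (u ` vert eps X \<subseteq> NV eps u X)"
proof
  assume sub: "u ` vert eps X \<subseteq> NV eps u X"
  obtain p q where pq: "p \<in> vert eps X" "q \<in> vert eps X" "p \<noteq> q" "u p = - u q"
    using nb_vert[OF e n] by blast
  have "NV eps u X = {u p, u q}" using NV_edge[OF e u X pq] .
  hence "u i \<in> {u p, u q}" "u j \<in> {u p, u q}" using sub i j by auto
  thus False using pq(4) uij by auto
qed

lemma core:
  assumes e: "eps > 0" and u: "u \<in> SF eps \<Omega>"
   and Ssub: "S \<subseteq> triangles eps" and pw: "\<forall>T\<in>S. \<forall>T'\<in>S. tri_connected eps u T T'"
   and T: "T \<in> S" and T': "T' \<in> S" and TT: "T \<inter> T' = closed_segment i j" and ne: "T \<noteq> T'"
   and i: "i \<in> lattice eps" and j: "j \<in> lattice eps" and uij: "u i \<noteq> u j" "u i \<noteq> - u j"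
   and F: "F \<subseteq> u ` (lattice eps \<inter> \<Union>S)" "card F = 4"
  shows False
proof -
  let ?H = "neighbours eps u"
  have rt: "?H\<^sup>*\<^sup>* T T'" using pw T T' unfolding tri_connected_def by blast
  have Tt: "T \<in> triangles eps" "T' \<in> triangles eps" using Ssub T T' by auto
  have iT: "i \<in> vert eps T" "j \<in> vert eps T" "i \<in> vert eps T'" "j \<in> vert eps T'"
    using TT i j unfolding vert_def by auto
  have ij: "i \<noteq> j" using uij by auto
  obtain Y1 where Y1: "?H T Y1" using rt ne by (metis converse_rtranclpE)
  obtain Y2 where "?H Y2 T'" using rt ne by (metis rtranclp.cases)
  hence Y2: "?H T' Y2" by (rule nb_sym)
  obtain k where k: "vert eps T = {i,j,k}" using vert_two[OF e Tt(1) iT(1,2) ij] by blast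
  obtain k' where k': "vert eps T' = {i,j,k'}" using vert_two[OF e Tt(2) iT(3,4) ij] by blast
  have lT: "leafy ?H T" using leafy_of[OF e u Tt(1) not_sub_NV[OF e u Tt(1) Y1 iT(1,2) uij]] .
  have lT': "leafy ?H T'" using leafy_of[OF e u Tt(2) not_sub_NV[OF e u Tt(2) Y2 iT(3,4) uij]] .
  have NVeq: "NV eps u T = NV eps u T'" using NV_rt[OF e u rt] .
  have k'NV: "u k' \<in> NV eps u T'"
  proof -
    obtain p q where pq: "p \<in> vert eps T'" "q \<in> vert eps T'" "p \<noteq> q" "u p = - u q"
      using nb_vert[OF e Y2] by blast
    have qp: "u q = - u p" using negsym[OF pq(4)] .
    have "p = k' \<or> q = k'"
    proof (rule ccontr)
      assume "\<not> (p = k' \<or> q = k')"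
      hence "p \<in> {i,j}" "q \<in> {i,j}" using pq(1,2) k' by auto
      hence "(p = i \<and> q = j) \<or> (p = j \<and> q = i)" using pq(3) by auto
      thus False using pq(4) qp uij by auto
    qed
    thus ?thesis unfolding NV_def using pq qp by blast
  qed
  have NVsub: "NV eps u T \<subseteq> u ` vert eps T" unfolding NV_def by blast
  have main: "u ` vert eps X \<subseteq> u ` vert eps T" if X: "X \<in> S" for X
  proof -
    have rX: "?H\<^sup>*\<^sup>* T X" using pw T X unfolding tri_connected_def by blast
    have Xt: "X \<in> triangles eps" using Ssub X by auto
    show ?thesis
    proof (cases "X = T")
      case True thus ?thesis by simp
    next
      case XT: False
      show ?thesis
      proof (cases "X = T'")
        case True
        have "u k' \<in> u ` vert eps T" using k'NV NVeq NVsub by blast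
        moreover have "u i \<in> u ` vert eps T" "u j \<in> u ` vert eps T" using iT by auto
        ultimately show ?thesis using True k' by auto
      next
        case XT': False
        have "\<not> leafy ?H X"
        proof
          assume lX: "leafy ?H X"
          show False
            by (rule graph3[of ?H T T' X, OF nb_sym deg[OF e u] lT lT' lX rt rX ne XT[symmetric] XT'[symmetric]])
        qed
        hence "u ` vert eps X \<subseteq> NV eps u X" using leafy_of[OF e u Xt] by blast
        moreover have "NV eps u X = NV eps u T" using NV_rt[OF e u rX] by simp
        ultimately show ?thesis using NVsub by blast
      qed
    qed
  qed
  have "u ` (lattice eps \<inter> \<Union>S) \<subseteq> u ` vert eps T"
  proof
    fix w assume "w \<in> u ` (lattice eps \<inter> \<Union>S)"
    then obtain p X where pX: "w = u p" "p \<in> lattice eps" "X \<in> S" "p \<in> X" by blast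
    hence "p \<in> vert eps X" unfolding vert_def by blast
    hence "w \<in> u ` vert eps X" using pX(1) by blast
    thus "w \<in> u ` vert eps T" using main[OF pX(3)] by blast
  qed
  hence "F \<subseteq> {u i, u j, u k}" using F(1) k by auto
  hence "card F \<le> card {u i, u j, u k}" by (intro card_mono) auto
  also have "\<dots> \<le> 3" by (auto simp: card_insert_if)
  finally show False using F(2) by simp
qed

theorem lemma5p5:
  fixes eps :: real and \<Omega> :: "pt set" and u :: "pt \<Rightarrow> spin" and R :: "pt set" and i j :: pt
  assumes "eps > 0" and "bounded \<Omega>" and "open \<Omega>"
    and "u \<in> SF eps \<Omega>"
    and "R \<in> regions eps u"
    and "\<exists>F. F \<subseteq> u ` (lattice eps \<inter> R) \<and> card F = 4"
    and "i \<in> lattice eps" and "j \<in> lattice eps"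
    and "closed_segment i j \<in> edges eps" and "closed_segment i j \<subseteq> R"
    and "u i \<notin> {u j, - u j}"
  shows "boundary_edge eps u R (closed_segment i j)"
proof -
  note e = assms(1) and u = assms(4) and i = assms(7) and j = assms(8)
  have uij: "u i \<noteq> u j" "u i \<noteq> - u j" using assms(11) by auto
  obtain S where S: "S \<subseteq> triangles eps" "\<forall>T\<in>S. \<forall>T'\<in>S. tri_connected eps u T T'" "R = \<Union>S"
    using assms(5) unfolding regions_def pw_connected_union_def by blast
  obtain F where F: "F \<subseteq> u ` (lattice eps \<inter> \<Union>S)" "card F = 4" using assms(6) S(3) by blast
  obtain i' j' where ij': "closed_segment i j = closed_segment i' j'" "dist i' j' = eps"
    using assms(9) unfolding edges_def by blast
  have "{i,j} = {i',j'}" using ij'(1) by simp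
  hence dij: "dist i j = eps" using ij'(2) by (auto simp: doubleton_eq_iff dist_commute)
  obtain T1 T2 where T12: "T1 \<in> triangles eps" "T2 \<in> triangles eps" "T1 \<noteq> T2"
     "T1 \<inter> T2 = closed_segment i j"
     "\<forall>Y\<in>triangles eps. midpoint i j \<in> Y \<longrightarrow> Y = T1 \<or> Y = T2"
    using MIDP_all[OF e i j dij] unfolding MIDP_def by blast
  have "midpoint i j \<in> R" using assms(10) midpoint_in_closed_segment by blast
  then obtain T0 where T0: "T0 \<in> S" "midpoint i j \<in> T0" using S(3) by blast
  have "T0 = T1 \<or> T0 = T2" using T12(5) T0 S(1) by blast
  then obtain T T' where TT: "T \<in> S" "T' \<in> triangles eps" "T \<inter> T' = closed_segment i j" "T \<noteq> T'"
  proof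
    assume "T0 = T1" thus ?thesis using that[of T1 T2] T0 T12 by blast
  next
    assume "T0 = T2" thus ?thesis using that[of T2 T1] T0 T12 by (auto simp: Int_commute)
  qed
  have C: "closed_segment i j \<in> Cedges eps u"
  proof -
    have "closed_segment i j \<notin> Nedges eps u"
    proof
      assume "closed_segment i j \<in> Nedges eps u"
      then obtain p q where pq: "closed_segment i j = closed_segment p q" "u p = - u q"
        unfolding Nedges_def by blast
      have "{i,j} = {p,q}" using pq(1) by simp
      hence "(i = p \<and> j = q) \<or> (i = q \<and> j = p)" by (auto simp: doubleton_eq_iff)
      thus False using pq(2) uij by (auto simp: negsym)
    qed
    thus ?thesis using assms(9) unfolding Cedges_def by blast
  qed
  have out: "T' \<subseteq> UNIV - interior R"
  proof
    fix x assume x: "x \<in> T'"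
    have "x \<notin> interior R"
    proof
      assume "x \<in> interior R"
      then obtain r where r: "r > 0" "ball x r \<subseteq> R" using mem_interior by blast
      obtain y where y: "dist x y < r" "\<forall>Y\<in>triangles eps. y \<in> Y \<longrightarrow> Y = T'"
        using int_pt[OF e TT(2) x r(1)] by blast
      have "y \<in> R" using y(1) r(2) by auto
      then obtain Y where "Y \<in> S" "y \<in> Y" using S(3) by blast
      hence "T' \<in> S" using y(2) S(1) by auto
      thus False using core[OF e u S(1,2) TT(1) _ TT(3,4) i j uij F] by blast
    qed
    thus "x \<in> UNIV - interior R" by simp
  qed
  show ?thesis unfolding boundary_edge_def
    using C TT S out by blast
qed


end
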